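(* Let $\tau_k>0$ ($1\le k\le N$) be time steps, $t_n=\sum_{k=1}^n\tau_k$, $r_k=\tau_k/\tau_{k-1}$ for $2\le k\le N$, $r_1:=0$, with $0<r_k<1+\sqrt2$ for $2\le k\le N$. Define $b_0^{(1)}=1/\tau_1$, $b_1^{(1)}=0$ and for $n\ge2$ $b_0^{(n)}=\frac{1+2r_n}{\tau_n(1+r_n)}$, $b_1^{(n)}=-\frac{r_n^2}{\tau_n(1+r_n)}$. Let $\eta$ satisfy $\frac{r_k^2}{1+2r_k}\le\eta<1$ for all $2\le k\le N$, and define $d_0^{(n)}=b_0^{(n)}$, $d_j^{(n)}=\eta^{j-1}(b_0^{(n)}\eta+b_1^{(n)})$ for $1\le j\le n$. Let $\kappa>0$, $\lambda\in(0,1)$, and let $\{g^k\}_{k=1}^N$, $\{w^k\}_{k=0}^N$ be nonnegative sequences with $$\sum_{k=1}^n d_{n-k}^{(n)}(w^k-w^{k-1})\le\kappa\sum_{k=1}^n\lambda^{n-k}w^k+g^n\qquad\text{for }1\le n\le N.$$ If $b_0^{(n)}\ge2\kappa$ (for all $1\le n\le N$), then $$w^n\le2\exp\Big(\frac{2\kappa t_n}{1-\lambda}\Big)\Big(w^0+\sum_{j=1}^n\frac{g^j}{b_0^{(j)}}\Big)\qquad\text{for }1\le n\le N.$$ *)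

theory Defs
  imports "HOL-Analysis.Analysis"
begin

definition tgrid :: "(nat \<Rightarrow> real) \<Rightarrow> nat \<Rightarrow> real" where
  "tgrid tau n = (\<Sum>k=1..n. tau k)"

definition ratio :: "(nat \<Rightarrow> real) \<Rightarrow> nat \<Rightarrow> real" where
  "ratio tau k = (if k \<le> 1 then 0 else tau k / tau (k - 1))"

definition b0 :: "(nat \<Rightarrow> real) \<Rightarrow> nat \<Rightarrow> real" where
  "b0 tau n = (if n = 1 then 1 / tau 1
     else (1 + 2 * ratio tau n) / (tau n * (1 + ratio tau n)))"

definition b1 :: "(nat \<Rightarrow> real) \<Rightarrow> nat \<Rightarrow> real" where
  "b1 tau n = (if n = 1 then 0
     else - ((ratio tau n)^2 / (tau n * (1 + ratio tau n))))"

definition dker :: "(nat \<Rightarrow> real) \<Rightarrow> real \<Rightarrow> nat \<Rightarrow> nat \<Rightarrow> real" where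
  "dker tau eta n j = (if j = 0 then b0 tau n
     else eta ^ (j - 1) * (b0 tau n * eta + b1 tau n))"

end

theory Submission
  imports Defs
begin

fun Sf :: "real \<Rightarrow> (nat \<Rightarrow> real) \<Rightarrow> nat \<Rightarrow> real" where
  "Sf e w 0 = 0"
| "Sf e w (Suc m) = e * Sf e w m + (w (Suc m) - w m)"

fun Lf :: "real \<Rightarrow> (nat \<Rightarrow> real) \<Rightarrow> nat \<Rightarrow> real" where
  "Lf e w 0 = 0"
| "Lf e w (Suc m) = w (Suc m) + e * Lf e w m"

lemma Sf_sum: "Sf e w n = (\<Sum>k=1..n. e ^ (n - k) * (w k - w (k - 1)))"
proof (induction n)
  case 0 then show ?case by simp
next
  case (Suc n)
  have "(\<Sum>k=1..Suc n. e ^ (Suc n - k) * (w k - w (k - 1)))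
      = (\<Sum>k=1..n. e ^ (Suc n - k) * (w k - w (k - 1))) + (w (Suc n) - w n)"
    by simp
  also have "(\<Sum>k=1..n. e ^ (Suc n - k) * (w k - w (k - 1)))
     = e * (\<Sum>k=1..n. e ^ (n - k) * (w k - w (k - 1)))"
    unfolding sum_distrib_left
    by (rule sum.cong) (auto simp: Suc_diff_le)
  finally show ?case using Suc by simp
qed

lemma Lf_sum: "Lf e w n = (\<Sum>k=1..n. e ^ (n - k) * w k)"
proof (induction n)
  case 0 then show ?case by simp
next
  case (Suc n)
  have "(\<Sum>k=1..Suc n. e ^ (Suc n - k) * w k)
      = (\<Sum>k=1..n. e ^ (Suc n - k) * w k) + w (Suc n)"
    by simp
  also have "(\<Sum>k=1..n. e ^ (Suc n - k) * w k)
     = e * (\<Sum>k=1..n. e ^ (n - k) * w k)"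
    unfolding sum_distrib_left
    by (rule sum.cong) (auto simp: Suc_diff_le)
  finally show ?case using Suc by simp
qed

lemma dker_sum:
  "(\<Sum>k=1..Suc m. dker tau eta (Suc m) (Suc m - k) * (w k - w (k - 1)))
   = b0 tau (Suc m) * (w (Suc m) - w m) + (b0 tau (Suc m) * eta + b1 tau (Suc m)) * Sf eta w m"
proof -
  have "(\<Sum>k=1..m. dker tau eta (Suc m) (Suc m - k) * (w k - w (k - 1)))
     = (\<Sum>k=1..m. (b0 tau (Suc m) * eta + b1 tau (Suc m)) * (eta ^ (m - k) * (w k - w (k - 1))))"
    by (rule sum.cong) (auto simp: dker_def Suc_diff_le)
  then show ?thesis by (simp add: Sf_sum sum_distrib_left dker_def)
qed

lemma W_sum: "w n - w 0 = (1 - e) * (\<Sum>k=1..n. Sf e w k) + e * Sf e w n"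
  by (induction n) (auto simp: algebra_simps)

theorem lemma5p1:
  fixes tau :: "nat \<Rightarrow> real" and N :: nat and eta kappa lam :: real
    and g w :: "nat \<Rightarrow> real"
  assumes tau_pos: "\<And>k. 1 \<le> k \<Longrightarrow> k \<le> N \<Longrightarrow> tau k > 0"
    and r_bound: "\<And>k. 2 \<le> k \<Longrightarrow> k \<le> N \<Longrightarrow>
                     0 < ratio tau k \<and> ratio tau k < 1 + sqrt 2"
    and eta_lower: "\<And>k. 2 \<le> k \<Longrightarrow> k \<le> N \<Longrightarrow>
                     (ratio tau k)^2 / (1 + 2 * ratio tau k) \<le> eta"
    and eta_lt1: "eta < 1"
    and kappa_pos: "kappa > 0"
    and lam: "0 < lam" "lam < 1"
    and g_nonneg: "\<And>k. 1 \<le> k \<Longrightarrow> k \<le> N \<Longrightarrow> g k \<ge> 0"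
    and w_nonneg: "\<And>k. k \<le> N \<Longrightarrow> w k \<ge> 0"
    and ineq: "\<And>n. 1 \<le> n \<Longrightarrow> n \<le> N \<Longrightarrow>
       (\<Sum>k=1..n. dker tau eta n (n - k) * (w k - w (k - 1)))
         \<le> kappa * (\<Sum>k=1..n. lam ^ (n - k) * w k) + g n"
    and b0_big: "\<And>n. 1 \<le> n \<Longrightarrow> n \<le> N \<Longrightarrow> b0 tau n \<ge> 2 * kappa"
  shows "\<And>n. 1 \<le> n \<Longrightarrow> n \<le> N \<Longrightarrow>
     w n \<le> 2 * exp (2 * kappa * tgrid tau n / (1 - lam))
               * (w 0 + (\<Sum>j=1..n. g j / b0 tau j))"
proof -
  have b0_ge: "b0 tau n \<ge> 1 / tau n" if "1 \<le> n" "n \<le> N" for n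
  proof -
    have t: "tau n > 0" using tau_pos that by auto
    show ?thesis
    proof (cases "n = 1")
      case True then show ?thesis by (simp add: b0_def)
    next
      case False
      then have r: "ratio tau n > 0" using r_bound[of n] that by auto
      have eq: "b0 tau n = (1 + 2 * ratio tau n) / (1 + ratio tau n) / tau n"
        using False by (simp add: b0_def)
      have "(1 + 2 * ratio tau n) / (1 + ratio tau n) \<ge> 1" using r by simp
      then show ?thesis unfolding eq using t by (intro divide_right_mono) auto
    qed
  qed
  have b0_pos: "b0 tau n > 0" if "1 \<le> n" "n \<le> N" for n
    using b0_ge[OF that] tau_pos[OF that] by (smt (verit) divide_pos_pos)
  define rho where "rho n = (if n \<le> 1 then 0 else (ratio tau n)^2 / (1 + 2 * ratio tau n))" for n
  have b1_eq: "b1 tau n = - rho n * b0 tau n" if "1 \<le> n" "n \<le> N" for n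
  proof (cases "n = 1")
    case True then show ?thesis by (simp add: b1_def rho_def)
  next
    case False
    then have r: "ratio tau n > 0" using r_bound[of n] that by auto
    have t: "tau n > 0" using tau_pos that by auto
    have gen: "x^2 / (y * (1 + x)) = x^2 / (1 + 2 * x) * ((1 + 2 * x) / (y * (1 + x)))"
      if "x > 0" "y > 0" for x y :: real
    proof -
      have c: "1 + 2 * x \<noteq> 0" using that by auto
      have "a / c * (c / D) = a / D" if "c \<noteq> 0" for a c D :: real using that by simp
      from this[OF c, of "x^2" "y * (1 + x)"] show ?thesis by (rule sym)
    qed
    show ?thesis using False that gen[OF r t] by (simp add: b1_def rho_def b0_def)
  qed
  have rho_nn: "0 \<le> rho n" if "1 \<le> n" "n \<le> N" for n
  proof (cases "n = 1")
    case True then show ?thesis by (simp add: rho_def)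
  next
    case False
    then have r: "ratio tau n > 0" using r_bound[of n] that by auto
    then show ?thesis by (simp add: rho_def)
  qed
  have rho_le: "rho n \<le> eta" if "2 \<le> n" "n \<le> N" for n
    using eta_lower[OF that] that by (simp add: rho_def)
  define R where "R n = kappa * Lf lam w n + g n" for n
  have Lf_nn: "Lf lam w n \<ge> 0" if "n \<le> N" for n
    unfolding Lf_sum using that lam w_nonneg by (intro sum_nonneg) auto
  have R_nn: "R n \<ge> 0" if "1 \<le> n" "n \<le> N" for n
    using Lf_nn[of n] g_nonneg[OF that] kappa_pos that unfolding R_def by simp
  define P where "P n = max (Sf eta w n) 0" for n
  have P_step: "P (Suc m) \<le> eta * P m + R (Suc m) / b0 tau (Suc m)" if "Suc m \<le> N" for m
  proof -
    have h1: "1 \<le> Suc m" by simp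
    note bp = b0_pos[OF h1 that]
    have "b0 tau (Suc m) * (w (Suc m) - w m) + (b0 tau (Suc m) * eta + b1 tau (Suc m)) * Sf eta w m
          \<le> R (Suc m)"
      using ineq[OF h1 that] unfolding dker_sum R_def Lf_sum[symmetric] by simp
    then have "b0 tau (Suc m) * (Sf eta w (Suc m) - rho (Suc m) * Sf eta w m) \<le> R (Suc m)"
      using b1_eq[OF h1 that] by (simp add: algebra_simps)
    then have s: "Sf eta w (Suc m) - rho (Suc m) * Sf eta w m \<le> R (Suc m) / b0 tau (Suc m)"
      using bp by (simp add: field_simps mult.commute)
    have Rn: "R (Suc m) / b0 tau (Suc m) \<ge> 0" using R_nn[OF h1 that] bp by simp
    show ?thesis
    proof (cases m)
      case 0
      then show ?thesis using s Rn by (simp add: P_def)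
    next
      case (Suc m')
      have "rho (Suc m) * Sf eta w m \<le> rho (Suc m) * P m"
        using rho_nn[OF h1 that] by (intro mult_left_mono) (auto simp: P_def)
      also have "\<dots> \<le> eta * P m"
        using rho_le[of "Suc m"] Suc that by (intro mult_right_mono) (auto simp: P_def)
      finally have a1: "rho (Suc m) * Sf eta w m \<le> eta * P m" .
      have "eta \<ge> 0" using rho_nn[OF h1 that] rho_le[of "Suc m"] Suc that by auto
      then have "eta * P m \<ge> 0" by (simp add: P_def)
      then show ?thesis using s Rn a1 by (simp add: P_def)
    qed
  qed
  have Q: "(1 - eta) * (\<Sum>k=1..n. P k) + eta * P n \<le> (\<Sum>j=1..n. R j / b0 tau j)" if "n \<le> N" for n
    using that
  proof (induction n)
    case 0 then show ?case by (simp add: P_def)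
  next
    case (Suc m)
    have "(1 - eta) * (\<Sum>k=1..Suc m. P k) + eta * P (Suc m)
        = (1 - eta) * (\<Sum>k=1..m. P k) + P (Suc m)" by (simp add: algebra_simps)
    also have "\<dots> \<le> (1 - eta) * (\<Sum>k=1..m. P k) + eta * P m + R (Suc m) / b0 tau (Suc m)"
      using P_step[OF Suc.prems] by simp
    also have "\<dots> \<le> (\<Sum>j=1..m. R j / b0 tau j) + R (Suc m) / b0 tau (Suc m)"
      using Suc by simp
    finally show ?case by simp
  qed
  define Phi where "Phi n = w 0 + (\<Sum>j=1..n. R j / b0 tau j)" for n
  have w_Phi: "w n \<le> Phi n" if "n \<le> N" for n
  proof (cases n)
    case 0 then show ?thesis by (simp add: Phi_def)
  next
    case (Suc m)
    have "w n - w 0 = (1 - eta) * (\<Sum>k=1..m. Sf eta w k) + Sf eta w n"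
      using W_sum[of w n eta] Suc by (simp add: algebra_simps)
    also have "\<dots> \<le> (1 - eta) * (\<Sum>k=1..m. P k) + P n"
      using eta_lt1 by (intro add_mono mult_left_mono sum_mono) (auto simp: P_def)
    also have "\<dots> = (1 - eta) * (\<Sum>k=1..n. P k) + eta * P n"
      using Suc by (simp add: algebra_simps)
    also have "\<dots> \<le> (\<Sum>j=1..n. R j / b0 tau j)" using Q[OF that] .
    finally show ?thesis by (simp add: Phi_def)
  qed
  have Phi_Suc: "Phi (Suc m) = Phi m + R (Suc m) / b0 tau (Suc m)" for m
    by (simp add: Phi_def)
  have Phi_mono: "Phi m \<le> Phi (Suc m)" if "Suc m \<le> N" for m
    using Phi_Suc[of m] R_nn[of "Suc m"] b0_pos[of "Suc m"] that by simp
  have Phi_nn: "Phi n \<ge> 0" if "n \<le> N" for n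
    using that
  proof (induction n)
    case 0 then show ?case using w_nonneg by (simp add: Phi_def)
  next
    case (Suc n) then show ?case using Phi_mono[of n] by simp
  qed
  have Lf_le: "Lf lam w n \<le> Phi n / (1 - lam)" if "n \<le> N" for n
    using that
  proof (induction n)
    case 0 then show ?case using w_nonneg lam by (simp add: Phi_def)
  next
    case (Suc m)
    have "Lf lam w (Suc m) = w (Suc m) + lam * Lf lam w m" by simp
    also have "\<dots> \<le> Phi (Suc m) + lam * (Phi (Suc m) / (1 - lam))"
    proof -
      have "Phi m / (1 - lam) \<le> Phi (Suc m) / (1 - lam)"
        using Phi_mono[OF Suc.prems] lam by (intro divide_right_mono) auto
      then show ?thesis
        using w_Phi[OF Suc.prems] Suc lam
        by (intro add_mono mult_left_mono) auto
    qed
    also have "\<dots> = Phi (Suc m) / (1 - lam)" using lam by (simp add: field_simps)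
    finally show ?case .
  qed
  define a where "a = 2 * kappa / (1 - lam)"
  define G where "G n = (\<Sum>j=1..n. g j / b0 tau j)" for n
  have G_nn: "G n \<ge> 0" if "n \<le> N" for n
    unfolding G_def using that g_nonneg b0_pos by (intro sum_nonneg) (auto intro!: divide_nonneg_pos)
  have main: "Phi n \<le> exp (a * tgrid tau n) * (w 0 + 2 * G n)" if "n \<le> N" for n
    using that
  proof (induction n)
    case 0 then show ?case by (simp add: Phi_def tgrid_def G_def)
  next
    case (Suc m)
    have h1: "1 \<le> Suc m" by simp
    note bp = b0_pos[OF h1 Suc.prems]
    define e where "e = kappa / b0 tau (Suc m)"
    have e0: "0 \<le> e" using kappa_pos bp by (simp add: e_def)
    have e2: "e \<le> 1 / 2" using b0_big[OF h1 Suc.prems] bp kappa_pos by (simp add: e_def field_simps)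
    have et: "e \<le> kappa * tau (Suc m)"
    proof -
      have "1 / b0 tau (Suc m) \<le> tau (Suc m)"
        using b0_ge[OF h1 Suc.prems] tau_pos[OF h1 Suc.prems] bp
        by (simp add: field_simps)
      then show ?thesis unfolding e_def using kappa_pos
        by (metis divide_inverse inverse_eq_divide mult_left_mono less_imp_le)
    qed
    define gg where "gg = g (Suc m) / b0 tau (Suc m)"
    have gg0: "gg \<ge> 0" using g_nonneg[OF h1 Suc.prems] bp by (simp add: gg_def)
    have IH: "Phi m \<le> exp (a * tgrid tau m) * (w 0 + 2 * G m)" using Suc by simp
    have Pm0: "Phi m \<ge> 0" using Phi_nn Suc.prems by simp
    have X0: "Phi (Suc m) \<ge> 0" using Phi_nn Suc.prems by simp
    have "Phi (Suc m) = Phi m + e * (w (Suc m) + lam * Lf lam w m) + gg"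
      unfolding Phi_Suc R_def e_def gg_def by (simp add: add_divide_distrib)
    also have "\<dots> \<le> Phi m + e * (Phi (Suc m) + lam * (Phi m / (1 - lam))) + gg"
      using w_Phi[OF Suc.prems] Lf_le[of m] Suc.prems e0 lam
      by (intro add_mono mult_left_mono order_refl) auto
    finally have "(1 - e) * Phi (Suc m) \<le> Phi m * (1 + e * lam / (1 - lam)) + gg"
      using lam by (simp add: algebra_simps)
    then have Y: "Phi (Suc m) \<le> (1 + 2 * e) * (Phi m * (1 + e * lam / (1 - lam)) + gg)"
    proof -
      assume h: "(1 - e) * Phi (Suc m) \<le> Phi m * (1 + e * lam / (1 - lam)) + gg"
      have "e * (2 * e) \<le> e * 1" using e0 e2 by (intro mult_left_mono) auto
      then have "(1 + 2 * e) * (1 - e) \<ge> 1" by (simp add: algebra_simps)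
      then have "1 * Phi (Suc m) \<le> ((1 + 2 * e) * (1 - e)) * Phi (Suc m)"
        using X0 by (intro mult_right_mono) auto
      then have "Phi (Suc m) \<le> (1 + 2 * e) * ((1 - e) * Phi (Suc m))"
        by (simp add: mult.assoc)
      also have "\<dots> \<le> (1 + 2 * e) * (Phi m * (1 + e * lam / (1 - lam)) + gg)"
        using h e0 by (intro mult_left_mono) auto
      finally show ?thesis .
    qed
    have fac: "(1 + 2 * e) * (1 + e * lam / (1 - lam)) \<le> exp (a * tau (Suc m))"
    proof -
      have "(1 + 2 * e) * (1 + e * lam / (1 - lam)) \<le> exp (2 * e) * exp (e * lam / (1 - lam))"
        using e0 lam by (intro mult_mono exp_ge_add_one_self) (auto simp: exp_ge_add_one_self)
      also have "\<dots> = exp (2 * e + e * lam / (1 - lam))" by (simp add: exp_add)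
      also have "2 * e + e * lam / (1 - lam) \<le> a * tau (Suc m)"
      proof -
        have "2 * e + e * lam / (1 - lam) = e * (2 - lam) / (1 - lam)" using lam by (simp add: field_simps)
        also have "\<dots> \<le> 2 * e / (1 - lam)" using e0 lam mult_left_mono[of "2 - lam" 2 e] by (intro divide_right_mono) (auto simp: mult.commute)
        also have "\<dots> \<le> 2 * (kappa * tau (Suc m)) / (1 - lam)" using et lam by (intro divide_right_mono) auto
        finally show ?thesis by (simp add: a_def)
      qed
      then have "exp (2 * e + e * lam / (1 - lam)) \<le> exp (a * tau (Suc m))" by simp
      finally show ?thesis .
    qed
    have "Phi (Suc m) \<le> ((1 + 2 * e) * (1 + e * lam / (1 - lam))) * Phi m + (1 + 2 * e) * gg"
      using Y by (simp add: algebra_simps)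
    also have "\<dots> \<le> exp (a * tau (Suc m)) * (exp (a * tgrid tau m) * (w 0 + 2 * G m)) + 2 * gg"
      using fac Pm0 IH e2 gg0 by (intro add_mono mult_mono) auto
    also have "\<dots> \<le> exp (a * tgrid tau (Suc m)) * (w 0 + 2 * G m) + exp (a * tgrid tau (Suc m)) * (2 * gg)"
    proof -
      have "tgrid tau (Suc m) = tgrid tau m + tau (Suc m)" by (simp add: tgrid_def)
      then have "exp (a * tgrid tau (Suc m)) = exp (a * tau (Suc m)) * exp (a * tgrid tau m)"
        by (simp add: distrib_left exp_add)
      moreover have "exp (a * tgrid tau (Suc m)) \<ge> 1"
      proof -
        have "tgrid tau (Suc m) \<ge> 0" unfolding tgrid_def using tau_pos Suc.prems
          by (intro sum_nonneg) (auto intro: less_imp_le)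
        moreover have "a \<ge> 0" using kappa_pos lam by (simp add: a_def)
        ultimately show ?thesis by simp
      qed
      moreover have "1 * (2 * gg) \<le> exp (a * tgrid tau (Suc m)) * (2 * gg)"
        using gg0 calculation(2) by (intro mult_right_mono) auto
      ultimately show ?thesis by (simp add: mult.assoc)
    qed
    also have "\<dots> = exp (a * tgrid tau (Suc m)) * (w 0 + 2 * G (Suc m))"
      by (simp add: G_def gg_def algebra_simps)
    finally show ?case .
  qed
  fix n assume n: "1 \<le> n" "n \<le> N"
  have "w n \<le> exp (a * tgrid tau n) * (w 0 + 2 * G n)" using w_Phi[OF n(2)] main[OF n(2)] by simp
  also have "\<dots> \<le> 2 * exp (a * tgrid tau n) * (w 0 + G n)"
    using w_nonneg[of 0] G_nn[OF n(2)] by (simp add: algebra_simps)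
  finally show "w n \<le> 2 * exp (2 * kappa * tgrid tau n / (1 - lam))
               * (w 0 + (\<Sum>j=1..n. g j / b0 tau j))"
    by (simp add: a_def G_def)
qed

end
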